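(* Assume $\mu>0$, $0<\lambda<\infty$, $\tau>0$, and let $\widetilde{\mathbf S'}=\frac1\lambda\mathbf M+\mathbf M(\tau\mathbf M+2\mu\mathbf N)^{-1}\mathbf N$. Then $\widetilde{\mathbf S'}$ is invertible and $$\widetilde{\mathbf S'}^{-1}=\frac{2\mu\lambda}{2\mu+\lambda}\mathbf M^{-1}+\tau\Big(\frac{\lambda}{2\mu+\lambda}\Big)^2\Big(\frac{\tau}{2\mu+\lambda}\mathbf M+\mathbf N\Big)^{-1}.$$
   Context: $\mathcal T_h$ is a conforming simplicial triangulation of a polygonal/polyhedral domain $\Omega\subset\mathbb R^d$ with mesh size $h$ and facet set $\mathcal E_h$; $\overline Q_h$ is the space of piecewise constant functions on $\mathcal T_h$ with a fixed basis, $\overline{\mathbf P}$ denoting the coefficient vector of $\overline p_h$ and $\langle\cdot,\cdot\rangle_2$ the Euclidean product. For $\overline q\in\overline Q_h$, $[\![\overline q]\!]$ is the jump across interior facets and $0$ on boundary facets. $\mathbf M$ and $\mathbf N$ are defined by $\langle\mathbf M\overline{\mathbf P},\overline{\mathbf Q}\rangle_2=(\overline p_h,\overline q_h)_{L^2(\Omega)}$ and $\langle\mathbf N\overline{\mathbf P},\overline{\mathbf Q}\rangle_2=\frac1h\sum_{F\in\mathcal E_h}\langle[\![\overline p_h]\!],[\![\overline q_h]\!]\rangle_{L^2(F)}$ for all $\overline p_h,\overline q_h\in\overline Q_h$. *)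

theory Defs
  imports "HOL-Analysis.Analysis"
begin

text \<open>Abstract data of a conforming simplicial mesh relevant for piecewise constants.
Cells are indexed by the finite type 'n, facets by the finite type 'f.
vol K = |K| (d-dimensional measure of cell K), area F = |F| ((d-1)-dimensional measure),
intF F says F is an interior facet, shared by the two distinct cells c1 F and c2 F.
A piecewise constant function is represented by its vector of cell values (real ^ 'n).
The fixed basis of the piecewise constants is given by an invertible matrix B whose
j-th column is the vector of cell values of the j-th basis function.\<close>

definition pc_l2 :: "('n::finite \<Rightarrow> real) \<Rightarrow> real^'n \<Rightarrow> real^'n \<Rightarrow> real" where
  "pc_l2 vol p q = (\<Sum>K\<in>UNIV. vol K * (p $ K) * (q $ K))"

text \<open>(1/h) times sum over facets of the L2(F) product of jumps; the jump is zero on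
boundary facets, and constant (p_K1 - p_K2) on an interior facet.\<close>
definition pc_jump :: "real \<Rightarrow> ('f::finite \<Rightarrow> bool) \<Rightarrow> ('f \<Rightarrow> 'n::finite) \<Rightarrow> ('f \<Rightarrow> 'n)
    \<Rightarrow> ('f \<Rightarrow> real) \<Rightarrow> real^'n \<Rightarrow> real^'n \<Rightarrow> real" where
  "pc_jump h intF c1 c2 area p q =
     (1 / h) * (\<Sum>F\<in>UNIV. (if intF F
        then area F * (p $ c1 F - p $ c2 F) * (q $ c1 F - q $ c2 F) else 0))"

definition mass_matrix :: "('n::finite \<Rightarrow> real) \<Rightarrow> real^'n^'n \<Rightarrow> real^'n^'n" where
  "mass_matrix vol B = (\<chi> i j. pc_l2 vol (column j B) (column i B))"

definition jump_matrix :: "real \<Rightarrow> ('f::finite \<Rightarrow> bool) \<Rightarrow> ('f \<Rightarrow> 'n::finite) \<Rightarrow> ('f \<Rightarrow> 'n)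
    \<Rightarrow> ('f \<Rightarrow> real) \<Rightarrow> real^'n^'n \<Rightarrow> real^'n^'n" where
  "jump_matrix h intF c1 c2 area B =
     (\<chi> i j. pc_jump h intF c1 c2 area (column j B) (column i B))"

end

theory Submission
  imports Defs
begin

lemma swap3: "(\<Sum>i\<in>A. \<Sum>j\<in>B. \<Sum>k\<in>C. f i j k) = (\<Sum>k\<in>C. \<Sum>i\<in>A. \<Sum>j\<in>B. f i j k)"
proof -
  have "(\<Sum>i\<in>A. \<Sum>j\<in>B. \<Sum>k\<in>C. f i j k) = (\<Sum>i\<in>A. \<Sum>k\<in>C. \<Sum>j\<in>B. f i j k)"
    by (rule sum.cong[OF refl], rule sum.swap)
  also have "\<dots> = (\<Sum>k\<in>C. \<Sum>i\<in>A. \<Sum>j\<in>B. f i j k)" by (rule sum.swap)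
  finally show ?thesis .
qed

lemma qM: "v \<bullet> (mass_matrix vol B *v v) = (\<Sum>K\<in>UNIV. vol K * ((B *v v) $ K)^2)"
proof -
  have "v \<bullet> (mass_matrix vol B *v v) = (\<Sum>i\<in>UNIV. \<Sum>j\<in>UNIV. \<Sum>K\<in>UNIV. vol K * (B$K$i * v$i) * (B$K$j * v$j))"
    by (simp add: inner_vec_def matrix_vector_mult_def mass_matrix_def pc_l2_def column_def
        sum_distrib_left sum_distrib_right mult_ac)
  also have "\<dots> = (\<Sum>K\<in>UNIV. \<Sum>i\<in>UNIV. \<Sum>j\<in>UNIV. vol K * (B$K$i * v$i) * (B$K$j * v$j))"
    by (rule swap3) 
  also have "\<dots> = (\<Sum>K\<in>UNIV. vol K * ((B *v v) $ K)^2)"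
    by (simp add: matrix_vector_mult_def power2_eq_square sum_product sum_distrib_left mult_ac)
  finally show ?thesis .
qed

lemma qN: "v \<bullet> (jump_matrix h intF c1 c2 area B *v v) = (1/h) * (\<Sum>F\<in>UNIV. if intF F then area F * ((B *v v) $ c1 F - (B *v v) $ c2 F)^2 else 0)"
proof -
  have "v \<bullet> (jump_matrix h intF c1 c2 area B *v v) = (1/h) * (\<Sum>i\<in>UNIV. \<Sum>j\<in>UNIV. \<Sum>F\<in>UNIV. if intF F then area F * ((B$c1 F$i - B$c2 F$i) * v$i) * ((B$c1 F$j - B$c2 F$j) * v$j) else 0)"
    by (simp add: inner_vec_def matrix_vector_mult_def jump_matrix_def pc_jump_def column_def
        sum_distrib_left sum_distrib_right mult_ac if_distrib cong: if_cong)
  also have "\<dots> = (1/h) * (\<Sum>F\<in>UNIV. \<Sum>i\<in>UNIV. \<Sum>j\<in>UNIV. if intF F then area F * ((B$c1 F$i - B$c2 F$i) * v$i) * ((B$c1 F$j - B$c2 F$j) * v$j) else 0)"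
    by (rule arg_cong[where f="\<lambda>x. (1/h) * x"], rule swap3) 
  also have "\<dots> = (1/h) * (\<Sum>F\<in>UNIV. if intF F then area F * ((B *v v) $ c1 F - (B *v v) $ c2 F)^2 else 0)"
    proof (rule arg_cong[where f="\<lambda>x. (1/h) * x"], rule sum.cong[OF refl])
    fix F
    have e: "(B *v v) $ c1 F - (B *v v) $ c2 F = (\<Sum>i\<in>UNIV. (B$c1 F$i - B$c2 F$i) * v$i)"
      by (simp add: matrix_vector_mult_def sum_subtractf[symmetric] left_diff_distrib)
    show "(\<Sum>i\<in>UNIV. \<Sum>j\<in>UNIV. if intF F then area F * ((B$c1 F$i - B$c2 F$i) * v$i) * ((B$c1 F$j - B$c2 F$j) * v$j) else 0) = (if intF F then area F * ((B *v v) $ c1 F - (B *v v) $ c2 F)^2 else 0)"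
      unfolding e by (simp add: power2_eq_square sum_product sum_distrib_left mult_ac)
  qed
  finally show ?thesis .
qed
lemma scal1:
  fixes s lam mu tau X Mv Nn :: real
  assumes "s > 0" "s = 2*mu + lam"
  shows "tau*(lam/s)*X - tau*(tau*lam/s^2)*Mv + 2*mu*(lam/s)*Nn - 2*mu*(tau*lam/s^2)*(X - tau/s*Mv)
     = 2*mu*lam/s*Nn + tau*(lam/s)^2*(X - tau/s*Mv)"
proof -
  have l: "lam = s - 2*mu" using assms by simp
  show ?thesis using assms(1) unfolding l by (simp add: field_simps power2_eq_square power3_eq_cube)
qed
lemma scal2:
  fixes s lam mu tau X Mv :: real
  assumes "s > 0" "s = 2*mu + lam" "lam > 0"
  shows "(1/lam)*(2*mu*lam/s*X + tau*(lam/s)^2*Mv) + ((lam/s)*X - tau*lam/s^2*Mv) = X"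
proof -
  have l: "2*mu = s - lam" using assms by simp
  have "(1/lam)*(2*mu*lam/s*X + tau*(lam/s)^2*Mv) = 2*mu/s*X + tau*lam/s^2*Mv"
    using assms(1,3) by (simp add: field_simps power2_eq_square)
  moreover have "2*mu/s*X + tau*lam/s^2*Mv + ((lam/s)*X - tau*lam/s^2*Mv) = (2*mu+lam)/s*X"
    using assms(1) by (simp add: field_simps)
  moreover have "(2*mu+lam)/s*X = X" using assms(1,2) by simp
  ultimately show ?thesis by simp
qed

lemma inv_props:
  fixes A :: "real^'n::finite^'n"
  assumes "invertible A" shows "A ** matrix_inv A = mat 1 \<and> matrix_inv A ** A = mat 1"
  using assms unfolding invertible_def matrix_inv_def by (rule someI_ex)

lemma inv_unique:
  fixes A R :: "real^'n::finite^'n"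
  assumes "A ** R = mat 1" shows "invertible A \<and> matrix_inv A = R"
proof -
  have RA: "R ** A = mat 1" using assms matrix_left_right_inverse by blast
  hence inv: "invertible A" using assms unfolding invertible_def by blast
  have "matrix_inv A = matrix_inv A ** (A ** R)" using assms by simp
  also have "\<dots> = (matrix_inv A ** A) ** R" by (simp add: matrix_mul_assoc)
  also have "\<dots> = R" using inv_props[OF inv] by simp
  finally show ?thesis using inv by simp
qed

lemma inj_invertible:
  fixes A :: "real^'n::finite^'n"
  assumes "\<And>v. A *v v = 0 \<Longrightarrow> v = 0" shows "invertible A"
proof -
  obtain C where "C ** A = mat 1" using assms matrix_left_invertible_ker by blast
  hence "A ** C = mat 1" using matrix_left_right_inverse by blast
  thus ?thesis using \<open>C ** A = mat 1\<close> unfolding invertible_def by blast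
qed

lemma comb_invertible:
  fixes vol :: "'n::finite \<Rightarrow> real" and area :: "'f::finite \<Rightarrow> real"
    and B :: "real^'n^'n"
  assumes h_pos: "h > 0" and vol_pos: "\<And>K. vol K > 0" and area_pos: "\<And>F. area F > 0"
    and basis: "invertible B" and al: "al > 0" and be: "be \<ge> 0"
  shows "invertible (al *\<^sub>R mass_matrix vol B + be *\<^sub>R jump_matrix h intF c1 c2 area B)"
proof (rule inj_invertible)
  fix v :: "real^'n"
  assume 0: "(al *\<^sub>R mass_matrix vol B + be *\<^sub>R jump_matrix h intF c1 c2 area B) *v v = 0"
  let ?qM = "v \<bullet> (mass_matrix vol B *v v)"
  let ?qN = "v \<bullet> (jump_matrix h intF c1 c2 area B *v v)"
  have "al * ?qM + be * ?qN = v \<bullet> ((al *\<^sub>R mass_matrix vol B + be *\<^sub>R jump_matrix h intF c1 c2 area B) *v v)"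
    by (simp add: matrix_vector_mult_add_rdistrib scaleR_matrix_vector_assoc[symmetric] inner_add_right)
  also have "\<dots> = 0" using 0 by simp
  finally have e: "al * ?qM + be * ?qN = 0" .
  have qNnn: "?qN \<ge> 0" unfolding qN using h_pos area_pos
    by (intro mult_nonneg_nonneg sum_nonneg) (auto intro!: mult_nonneg_nonneg simp: less_imp_le)
  have qMnn: "?qM \<ge> 0" unfolding qM using vol_pos
    by (intro sum_nonneg) (auto intro!: mult_nonneg_nonneg simp: less_imp_le)
  have "al * ?qM = 0" using e qNnn qMnn al be
    by (smt (verit) mult_nonneg_nonneg)
  hence "?qM = 0" using al by simp
  hence "(\<Sum>K\<in>UNIV. vol K * ((B *v v) $ K)^2) = 0" unfolding qM .
  hence "\<forall>K\<in>UNIV. vol K * ((B *v v) $ K)^2 = 0"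
    by (subst (asm) sum_nonneg_eq_0_iff) (auto intro!: mult_nonneg_nonneg simp: less_imp_le vol_pos)
  hence "B *v v = 0" using vol_pos by (auto simp: vec_eq_iff) (metis less_irrefl)
  thus "v = 0" using inj_matrix_vector_mult[OF basis]
    by (metis injD matrix_vector_mult_0_right)
qed

theorem theorem3p11:
  fixes vol :: "'n::finite \<Rightarrow> real"
    and area :: "'f::finite \<Rightarrow> real"
    and intF :: "'f \<Rightarrow> bool"
    and c1 c2 :: "'f \<Rightarrow> 'n"
    and B :: "real^'n^'n"
    and h mu lam tau :: real
    and M N :: "real^'n^'n"
  assumes h_pos: "h > 0"
    and vol_pos: "\<And>K. vol K > 0"
    and area_pos: "\<And>F. area F > 0"
    and interior_cells: "\<And>F. intF F \<Longrightarrow> c1 F \<noteq> c2 F"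
    and basis: "invertible B"
    and M_def: "M = mass_matrix vol B"
    and N_def: "N = jump_matrix h intF c1 c2 area B"
    and mu_pos: "mu > 0" and lambda_pos: "lam > 0" and tau_pos: "tau > 0"
  shows "invertible ((1 / lam) *\<^sub>R M + M ** matrix_inv (tau *\<^sub>R M + (2 * mu) *\<^sub>R N) ** N)
    \<and> matrix_inv ((1 / lam) *\<^sub>R M + M ** matrix_inv (tau *\<^sub>R M + (2 * mu) *\<^sub>R N) ** N)
      = (2 * mu * lam / (2 * mu + lam)) *\<^sub>R matrix_inv M
        + (tau * (lam / (2 * mu + lam))^2) *\<^sub>R
            matrix_inv ((tau / (2 * mu + lam)) *\<^sub>R M + N)"
proof -
  define s where "s = 2 * mu + lam"
  have s_pos: "s > 0" using mu_pos lambda_pos by (simp add: s_def)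
  define P where "P = tau *\<^sub>R M + (2 * mu) *\<^sub>R N"
  define Q where "Q = (tau / (2 * mu + lam)) *\<^sub>R M + N"
  define S where "S = (1 / lam) *\<^sub>R M + M ** matrix_inv P ** N"
  define R where "R = (2 * mu * lam / (2 * mu + lam)) *\<^sub>R matrix_inv M
        + (tau * (lam / (2 * mu + lam))^2) *\<^sub>R matrix_inv Q"
  have iM: "invertible M"
    using comb_invertible[OF h_pos vol_pos area_pos basis, of 1 0] by (simp add: M_def)
  have iP: "invertible P"
    using comb_invertible[OF h_pos vol_pos area_pos basis, of tau "2*mu"] tau_pos mu_pos
    by (simp add: M_def N_def P_def)
  have iQ: "invertible Q"
    using comb_invertible[OF h_pos vol_pos area_pos basis, of "tau / (2 * mu + lam)" 1] tau_pos mu_pos lambda_pos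
    by (simp add: M_def N_def Q_def)
  note Mi = inv_props[OF iM] and Pi = inv_props[OF iP] and Qi = inv_props[OF iQ]
  have key: "S *v (R *v x) = x" for x
  proof -
    define u where "u = matrix_inv M *v x"
    define w where "w = matrix_inv Q *v x"
    define m where "m = M *v w"
    define n where "n = N *v u"
    have Mu: "M *v u = x" using Mi by (simp add: u_def matrix_vector_mul_assoc)
    have Qw: "Q *v w = x" using Qi by (simp add: w_def matrix_vector_mul_assoc)
    hence Nw: "N *v w = x - (tau / s) *\<^sub>R m"
      by (simp add: Q_def m_def s_def matrix_vector_mult_add_rdistrib scaleR_matrix_vector_assoc[symmetric] algebra_simps)
    define y where "y = R *v x"
    have y: "y = (2 * mu * lam / s) *\<^sub>R u + (tau * (lam / s)^2) *\<^sub>R w"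
      by (simp add: y_def R_def u_def w_def s_def matrix_vector_mult_add_rdistrib scaleR_matrix_vector_assoc[symmetric])
    define z where "z = (lam / s) *\<^sub>R u - (tau * lam / s^2) *\<^sub>R w"
    have Pz: "P *v z = N *v y"
    proof -
      have eq1: "P *v z = (tau * (lam / s)) *\<^sub>R x - (tau * (tau * lam / s^2)) *\<^sub>R m
          + (2 * mu * (lam / s)) *\<^sub>R n - (2 * mu * (tau * lam / s^2)) *\<^sub>R (x - (tau / s) *\<^sub>R m)"
        by (simp add: P_def z_def matrix_vector_mult_add_rdistrib scaleR_matrix_vector_assoc[symmetric]
            matrix_vector_mult_diff_distrib matrix_vector_mult_scaleR Mu Nw m_def n_def algebra_simps)
      have eq2: "N *v y = (2 * mu * lam / s) *\<^sub>R n + (tau * (lam / s)^2) *\<^sub>R (x - (tau / s) *\<^sub>R m)"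
        by (simp add: y matrix_vector_right_distrib matrix_vector_mult_scaleR Nw n_def)
      show ?thesis
      proof (rule vec_eq_iff[THEN iffD2], rule allI)
        fix i
        have "(P *v z) $ i = tau*(lam/s)*x$i - tau*(tau*lam/s^2)*m$i + 2*mu*(lam/s)*n$i - 2*mu*(tau*lam/s^2)*(x$i - tau/s*m$i)"
          unfolding eq1 by simp
        moreover have "(N *v y) $ i = 2*mu*lam/s*n$i + tau*(lam/s)^2*(x$i - tau/s*m$i)"
          unfolding eq2 by simp
        ultimately show "(P *v z) $ i = (N *v y) $ i" using scal1[OF s_pos s_def] by simp
      qed
    qed
    have "matrix_inv P *v (N *v y) = z"
      using Pi by (simp add: Pz[symmetric] matrix_vector_mul_assoc)
    hence "S *v y = (1 / lam) *\<^sub>R (M *v y) + M *v z"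
      by (simp add: S_def matrix_vector_mult_add_rdistrib scaleR_matrix_vector_assoc[symmetric] matrix_vector_mul_assoc[symmetric])
    also have "\<dots> = (1/lam) *\<^sub>R ((2 * mu * lam / s) *\<^sub>R x + (tau * (lam / s)^2) *\<^sub>R m) + ((lam / s) *\<^sub>R x - (tau * lam / s^2) *\<^sub>R m)"
      by (simp add: y z_def matrix_vector_right_distrib matrix_vector_mult_diff_distrib matrix_vector_mult_scaleR Mu m_def[symmetric])
    also have "\<dots> = x"
    proof (rule vec_eq_iff[THEN iffD2], rule allI)
      fix i
      show "((1/lam) *\<^sub>R ((2 * mu * lam / s) *\<^sub>R x + (tau * (lam / s)^2) *\<^sub>R m) + ((lam / s) *\<^sub>R x - (tau * lam / s^2) *\<^sub>R m)) $ i = x $ i"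
        using scal2[OF s_pos s_def lambda_pos, of "x$i" "m$i" tau] by (simp add: mult_ac)
    qed
    finally show ?thesis by (simp add: y_def)
  qed
  have "S ** R = mat 1"
    by (simp add: matrix_eq matrix_vector_mul_assoc[symmetric] key)
  from inv_unique[OF this] show ?thesis by (simp add: S_def R_def P_def Q_def)
qed

end
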